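(* Let $\alpha<0$, $\beta>0$, $\gamma\in(0,1)$, and let $D$ be a finite cylinder around the $x^{(3)}$-axis with lateral boundary $\{r=1\}$. There does not exist a smooth ASE solution on $D\times[0,T_0)$ (satisfying the Basic assumptions) which is an asymptotic self-similar blow-up solution of the form $$v=\frac{1}{(T_0-t)^\alpha}\Theta\Big(\frac{x}{(T_0-t)^{1-\alpha}}\Big)e_\theta+\frac{(T_0-t)^\beta}{(T_0-t)^\alpha}V^r\Big(\frac{x}{(T_0-t)^{1-\alpha}}\Big)e_r+\frac{(T_0-t)^\beta}{(T_0-t)^\alpha}V^{(3)}\Big(\frac{x}{(T_0-t)^{1-\alpha}}\Big)e_3+\frac{o(T_0-t)}{(T_0-t)^\alpha}W(x,t)$$ with the following properties: (a) the spatial center of the blow-up sequence is the side boundary point $p_0=(1,0,0)$ in $(r,\theta,x^{(3)})$ coordinates; (b) the profiles $\Theta,V^r,V^{(3)}$ are nontrivial local $C^{2,\gamma}_x$ functions and the error $W$ is a local $C^{2,2,\gamma}_{x,t}$ function.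
   Context: Cylindrical coordinates: $r=\sqrt{(x^{(1)})^2+(x^{(2)})^2}$, $e_r,e_\theta,e_3$ the radial, angular and axial unit vectors. ASE: axially symmetric Euler equations $\partial_t v+v\cdot\nabla v+\nabla p=0$, $\nabla\cdot v=0$, with $v=v^re_r+v^\theta e_\theta+v^{(3)}e_3$ and components depending only on $(r,x^{(3)},t)$. Basic assumptions: no penetration $v\cdot n=0$ on the lateral boundary and periodicity in $x^{(3)}$ across top and bottom. $o(T_0-t)$ denotes a scalar factor that is $o(T_0-t)$ as $t\to T_0$. The blow-up sequence centered at $p_0$ is $\tilde v_k(\tilde x,\tilde t)=Q_k^{-1}v(Q_k^{-(1-\alpha)/\alpha}\tilde x+p_0,Q_k^{-1/\alpha}\tilde t+t_k)$ with $Q_k=(T_0-t_k)^{-\alpha}$ and $t_k\uparrow T_0$ (so $Q_k\to0$ since $\alpha<0$). *)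

theory Defs
  imports "HOL-Analysis.Analysis" "HOL-Library.Landau_Symbols"
begin

definition rad :: "(real^3) \<Rightarrow> real" where
  "rad x = sqrt ((x$1)^2 + (x$2)^2)"

definition e_r :: "(real^3) \<Rightarrow> real^3" where
  "e_r x = vector [x$1 / rad x, x$2 / rad x, 0]"

definition e_th :: "(real^3) \<Rightarrow> real^3" where
  "e_th x = vector [- (x$2) / rad x, x$1 / rad x, 0]"

definition e_3 :: "real^3" where
  "e_3 = vector [0, 0, 1]"

text \<open>The side boundary point p0 = (r,theta,x3) = (1,0,0), i.e. Cartesian (1,0,0).\<close>
definition p0 :: "real^3" where
  "p0 = vector [1, 0, 0]"

text \<open>Infinite solid cylinder of radius 1 (solutions are L-periodic in x3 on it) and the
  finite cylinder D (one period, centred at height 0 so that p0 lies in it).\<close>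
definition cyl :: "(real^3) set" where
  "cyl = {x. rad x \<le> 1}"

definition fin_cyl :: "real \<Rightarrow> (real^3) set" where
  "fin_cyl L = {x. rad x \<le> 1 \<and> - L / 2 \<le> x$3 \<and> x$3 \<le> L / 2}"

primrec iter_dd :: "('a::real_normed_vector \<Rightarrow> 'b::real_normed_vector) \<Rightarrow> 'a list \<Rightarrow> 'a \<Rightarrow> 'b" where
  "iter_dd f [] = f"
| "iter_dd f (u # us) = (\<lambda>x. frechet_derivative (iter_dd f us) (at x) u)"

definition smooth_on_open :: "'a::real_normed_vector set \<Rightarrow> ('a \<Rightarrow> 'b::real_normed_vector) \<Rightarrow> bool" where
  "smooth_on_open U f \<longleftrightarrow> open U \<and> (\<forall>us. iter_dd f us differentiable_on U)"

definition dx :: "((real^3) \<Rightarrow> real \<Rightarrow> 'b::real_normed_vector) \<Rightarrow> (real^3) \<Rightarrow> real \<Rightarrow> 3 \<Rightarrow> 'b" where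
  "dx f x t i = frechet_derivative (\<lambda>y. f y t) (at x) (axis i 1)"

definition dt :: "((real^3) \<Rightarrow> real \<Rightarrow> 'b::real_normed_vector) \<Rightarrow> (real^3) \<Rightarrow> real \<Rightarrow> 'b" where
  "dt f x t = frechet_derivative (\<lambda>s. f x s) (at t) 1"

text \<open>v, p are smooth on an open neighbourhood of cyl x [0,T0) (smoothness up to the boundary),
  satisfy the Euler equations there, v is axially symmetric, satisfies no penetration
  on r = 1, and (v,p) are L-periodic in x3.\<close>
definition ASE_solution ::
  "real \<Rightarrow> real \<Rightarrow> ((real^3) \<Rightarrow> real \<Rightarrow> real^3) \<Rightarrow> ((real^3) \<Rightarrow> real \<Rightarrow> real) \<Rightarrow> bool" where
  "ASE_solution L T0 v p \<longleftrightarrow>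
     (\<exists>U. cyl \<times> {0..<T0} \<subseteq> U \<and> smooth_on_open U (\<lambda>(x,t). v x t)
          \<and> smooth_on_open U (\<lambda>(x,t). p x t))
   \<and> (\<forall>x t. x \<in> cyl \<and> 0 \<le> t \<and> t < T0 \<longrightarrow>
        dt v x t + (\<Sum>j\<in>UNIV. (v x t $ j) *\<^sub>R dx v x t j) + (\<chi> i. dx p x t i) = 0
        \<and> (\<Sum>j\<in>UNIV. dx v x t j $ j) = 0)
   \<and> (\<forall>x y t. x \<in> cyl \<and> 0 < rad x \<and> rad y = rad x \<and> y$3 = x$3 \<and> 0 \<le> t \<and> t < T0 \<longrightarrow>
        v x t \<bullet> e_r x = v y t \<bullet> e_r y \<and> v x t \<bullet> e_th x = v y t \<bullet> e_th y
        \<and> v x t \<bullet> e_3 = v y t \<bullet> e_3)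
   \<and> (\<forall>x t. rad x = 1 \<and> 0 \<le> t \<and> t < T0 \<longrightarrow> v x t \<bullet> e_r x = 0)
   \<and> (\<forall>x t. x \<in> cyl \<and> 0 \<le> t \<and> t < T0 \<longrightarrow>
        v (x + L *\<^sub>R e_3) t = v x t \<and> p (x + L *\<^sub>R e_3) t = p x t)"

definition axes3 :: "(real^3) set" where
  "axes3 = range (\<lambda>i::3. axis i (1::real))"

definition C2g_loc :: "real \<Rightarrow> (real^3) set \<Rightarrow> ((real^3) \<Rightarrow> real) \<Rightarrow> bool" where
  "C2g_loc \<gamma> S F \<longleftrightarrow>
     (\<exists>U. open U \<and> S \<subseteq> U
        \<and> (\<forall>us. set us \<subseteq> axes3 \<and> length us \<le> 1 \<longrightarrow> iter_dd F us differentiable_on U)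
        \<and> (\<forall>us. set us \<subseteq> axes3 \<and> length us \<le> 2 \<longrightarrow> continuous_on U (iter_dd F us)))
   \<and> (\<forall>K. bounded K \<and> K \<subseteq> S \<longrightarrow>
        (\<forall>us. set us \<subseteq> axes3 \<and> length us = 2 \<longrightarrow>
          (\<exists>C. \<forall>x\<in>K. \<forall>y\<in>K. \<bar>iter_dd F us x - iter_dd F us y\<bar> \<le> C * dist x y powr \<gamma>)))"

definition sp_dirs :: "((real^3) \<times> real) set" where
  "sp_dirs = (\<lambda>u. (u, 0)) ` axes3"

definition tm_dir :: "(real^3) \<times> real" where
  "tm_dir = (0, 1)"

definition adm22 :: "((real^3) \<times> real) list \<Rightarrow> bool" where
  "adm22 us \<longleftrightarrow> set us \<subseteq> sp_dirs \<union> {tm_dir}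
     \<and> length (filter (\<lambda>u. u \<in> sp_dirs) us) \<le> 2
     \<and> length (filter (\<lambda>u. u = tm_dir) us) \<le> 2"

definition C22g_loc :: "real \<Rightarrow> (real^3) set \<Rightarrow> real set \<Rightarrow> ((real^3) \<Rightarrow> real \<Rightarrow> real^3) \<Rightarrow> bool" where
  "C22g_loc \<gamma> S I W \<longleftrightarrow>
     (\<exists>U. open U \<and> S \<times> I \<subseteq> U
        \<and> (\<forall>us. (\<exists>u. adm22 (u # us)) \<longrightarrow> iter_dd (\<lambda>(x,t). W x t) us differentiable_on U)
        \<and> (\<forall>us. adm22 us \<longrightarrow> continuous_on U (iter_dd (\<lambda>(x,t). W x t) us)))
   \<and> (\<forall>K. bounded K \<longrightarrow> (\<forall>us. adm22 us \<longrightarrow>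
        (\<exists>C. \<forall>x\<in>K \<inter> S. \<forall>t\<in>I.
            norm (iter_dd (\<lambda>(x,t). W x t) us (x, t)) \<le> C
          \<and> (\<forall>y\<in>K \<inter> S. norm (iter_dd (\<lambda>(x,t). W x t) us (x, t)
                               - iter_dd (\<lambda>(x,t). W x t) us (y, t)) \<le> C * dist x y powr \<gamma>))))"

end

theory Submission
  imports Defs
begin

lemma inner3: "(x::real^3) \<bullet> y = x$1*y$1 + x$2*y$2 + x$3*y$3"
  by (simp add: inner_vec_def sum_3)

lemma rad_sq: "(rad x)^2 = (x$1)^2 + (x$2)^2"
  unfolding rad_def by simp

lemma eth_props:
  assumes "rad x > 0"
  shows "e_th x \<bullet> e_th x = 1" "e_r x \<bullet> e_th x = 0" "e_3 \<bullet> e_th x = 0" "norm (e_th x) = 1"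
proof -
  have r: "(rad x)^2 = (x$1)^2 + (x$2)^2" by (rule rad_sq)
  have p: "(x$1)^2 + (x$2)^2 > 0" using assms r by (metis zero_less_power)
  have "e_th x \<bullet> e_th x = ((x$1)^2 + (x$2)^2) / (rad x)^2"
    by (simp add: inner3 e_th_def power2_eq_square add_divide_distrib)
  then show 1: "e_th x \<bullet> e_th x = 1" using p r by (cases "x$1 = 0 \<and> x$2 = 0") auto
  show "e_r x \<bullet> e_th x = 0" using assms
    by (simp add: inner3 e_th_def e_r_def field_simps)
  show "e_3 \<bullet> e_th x = 0"
    by (simp add: inner3 e_th_def e_3_def)
  show "norm (e_th x) = 1" using 1 by (simp add: norm_eq_sqrt_inner)
qed

lemma ansatz_solve:
  assumes "rad x > 0" "\<sigma> > 0"
    and "v = (1 / \<sigma>) *\<^sub>R (A *\<^sub>R e_th x) + k *\<^sub>R (B *\<^sub>R e_r x) + k *\<^sub>R (D *\<^sub>R e_3) + (G / \<sigma>) *\<^sub>R Wv"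
  shows "A = \<sigma> * (v \<bullet> e_th x) - G * (Wv \<bullet> e_th x)"
proof -
  have "v \<bullet> e_th x = A / \<sigma> + (G/\<sigma>) * (Wv \<bullet> e_th x)"
    using eth_props[OF assms(1)] assms(3)
    by (simp add: inner_add_left inner_commute[of "e_th x" "e_r x"] inner_commute[of "e_th x" e_3])
  then show ?thesis using assms(2) by (simp add: field_simps)
qed

lemma p0c [simp]: "p0$1 = 1" "p0$2 = 0" "p0$3 = 0" by (simp_all add: p0_def)
lemma e3c [simp]: "e_3$1 = 0" "e_3$2 = 0" "e_3$3 = 1" by (simp_all add: e_3_def)

lemma bounded_fin_cyl: "bounded (fin_cyl L)"
proof -
  have "norm x \<le> 2 + \<bar>L\<bar>" if "x \<in> fin_cyl L" for x
  proof -
    from that have r: "rad x \<le> 1" and z: "\<bar>x$3\<bar> \<le> \<bar>L\<bar>" by (auto simp: fin_cyl_def)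
    have "\<bar>x$1\<bar> \<le> rad x" unfolding rad_def by (rule real_le_rsqrt) (simp add: power2_abs)
    moreover have "\<bar>x$2\<bar> \<le> rad x" unfolding rad_def by (rule real_le_rsqrt) (simp add: power2_abs)
    moreover have "norm x \<le> \<bar>x$1\<bar> + \<bar>x$2\<bar> + \<bar>x$3\<bar>"
      using norm_le_l1_cart[of x] by (simp add: sum_3)
    ultimately show ?thesis using r z by linarith
  qed
  then show ?thesis unfolding bounded_iff by blast
qed

lemma rad_nonneg: "rad x \<ge> 0" by (simp add: rad_def)

lemma norm_eth_le: "norm (e_th x) \<le> 1"
proof (cases "rad x = 0")
  case True
  then have "e_th x = 0" by (simp add: e_th_def vec_eq_iff forall_3)
  then show ?thesis by simp
next
  case False
  then show ?thesis using eth_props(4)[of x] rad_nonneg[of x] by simp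
qed

context
  fixes \<alpha> L T0 C b :: real and UT UV and \<Theta> :: "real^3 \<Rightarrow> real"
    and W v :: "real^3 \<Rightarrow> real \<Rightarrow> real^3" and g :: "real \<Rightarrow> real"
  assumes al: "\<alpha> < 0" and Lp: "L > 0" and T0p: "T0 > 0"
  and UTo: "open UT" and UTs: "{y. y$1 \<le> 0} \<subseteq> UT" and UTc: "continuous_on UT \<Theta>"
  and Cb: "\<forall>x\<in>fin_cyl L. \<forall>t\<in>{0..<T0}. norm (W x t) \<le> C"
  and bT: "b < T0" and gb: "\<forall>\<tau>. b < \<tau> \<and> \<tau> < T0 \<longrightarrow> \<bar>g \<tau>\<bar> \<le> T0 - \<tau>"
  and UVo: "open UV" and UVs: "cyl \<times> {0..<T0} \<subseteq> UV" and UVc: "continuous_on UV (\<lambda>(x,t). v x t)"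
  and sym: "\<forall>x y t. x \<in> cyl \<and> 0 < rad x \<and> rad y = rad x \<and> y$3 = x$3 \<and> 0 \<le> t \<and> t < T0 \<longrightarrow>
               v x t \<bullet> e_th x = v y t \<bullet> e_th y"
  and ans: "\<forall>x t. x \<in> fin_cyl L \<and> 0 < rad x \<and> 0 \<le> t \<and> t < T0 \<longrightarrow>
     \<Theta> ((1 / (T0 - t) powr (1 - \<alpha>)) *\<^sub>R (x - p0)) = (T0 - t) powr \<alpha> * (v x t \<bullet> e_th x) - g t * (W x t \<bullet> e_th x)"
begin

lemma W_eth: "x \<in> fin_cyl L \<Longrightarrow> 0 \<le> t \<Longrightarrow> t < T0 \<Longrightarrow> \<bar>W x t \<bullet> e_th x\<bar> \<le> C"
proof -
  assume a: "x \<in> fin_cyl L" "0 \<le> t" "t < T0"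
  have "\<bar>W x t \<bullet> e_th x\<bar> \<le> norm (W x t) * norm (e_th x)" by (rule Cauchy_Schwarz_ineq2)
  also have "\<dots> \<le> norm (W x t) * 1" by (rule mult_left_mono[OF norm_eth_le]) simp
  also have "\<dots> \<le> C" using Cb a by auto
  finally show ?thesis .
qed

lemma C_nonneg: "C \<ge> 0"
proof -
  have "p0 \<in> fin_cyl L" using Lp by (simp add: fin_cyl_def rad_def)
  then have "norm (W p0 0) \<le> C" using Cb T0p by auto
  then show ?thesis by (meson norm_ge_zero order_trans)
qed

lemma axis_step:
  assumes s1: "0 < s'" "s' \<le> T0" "b < T0 - s'"
  and lam: "lam = s' powr (1 - \<alpha>)" and hc: "\<bar>lam * c\<bar> \<le> L/2"
  shows "\<bar>\<Theta> ((1/lam) *\<^sub>R ((lam*c) *\<^sub>R e_3 - p0))\<bar> \<le> C * s'"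
proof -
  define t' where "t' = T0 - s'"
  have t': "0 \<le> t'" "t' < T0" "b < t'" using s1 by (auto simp: t'_def)
  have lp: "lam > 0" using lam s1 by simp
  define xh where "xh h = h *\<^sub>R p0 + (lam*c) *\<^sub>R e_3" for h
  have xhc: "(xh h)$1 = h" "(xh h)$2 = 0" "(xh h)$3 = lam*c" for h by (simp_all add: xh_def)
  have radxh: "rad (xh h) = \<bar>h\<bar>" for h by (simp add: rad_def xhc)
  have inF: "xh h \<in> fin_cyl L" if "\<bar>h\<bar> \<le> 1" for h
    using that hc by (auto simp: fin_cyl_def radxh xhc abs_le_iff)
  have inC: "xh h \<in> cyl" if "\<bar>h\<bar> \<le> 1" for h
    using that by (auto simp: cyl_def radxh)
  define \<phi> where "\<phi> h = (v (xh h) t')$2" for h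
  have ip: "v (xh h) t' \<bullet> e_th (xh h) = \<phi> h" if "h > 0" for h
    using that by (simp add: inner3 e_th_def radxh xhc \<phi>_def)
  have ineg: "v (xh (-h)) t' \<bullet> e_th (xh (-h)) = - \<phi> (-h)" if "h > 0" for h
    using that by (simp add: inner3 e_th_def radxh xhc \<phi>_def)
  have phisym: "\<phi> h = - \<phi> (-h)" if "0 < h" "h \<le> 1" for h
  proof -
    have "v (xh h) t' \<bullet> e_th (xh h) = v (xh (-h)) t' \<bullet> e_th (xh (-h))"
      using sym inC[of h] that t' by (auto simp: radxh xhc)
    then show ?thesis using ip[OF that(1)] ineg[OF that(1)] by simp
  qed
  have "(xh 0, t') \<in> UV" using UVs inC[of 0] t' by auto
  then have contv: "isCont (\<lambda>(x,t). v x t) (xh 0, t')"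
    using UVc UVo continuous_on_eq_continuous_at by blast
  have xhT: "((\<lambda>h. xh h) \<longlongrightarrow> xh 0) (at_right 0)"
    unfolding xh_def by (intro tendsto_eq_intros) auto
  have xhT2: "((\<lambda>h. xh (-h)) \<longlongrightarrow> xh 0) (at_right 0)"
    unfolding xh_def by (intro tendsto_eq_intros) auto
  have T1: "(\<phi> \<longlongrightarrow> \<phi> 0) (at_right 0)"
    using tendsto_vec_nth[OF isCont_tendsto_compose[OF contv tendsto_Pair[OF xhT tendsto_const]], of 2]
    by (simp add: \<phi>_def[abs_def])
  have T2: "((\<lambda>h. \<phi> (-h)) \<longlongrightarrow> \<phi> 0) (at_right 0)"
    using tendsto_vec_nth[OF isCont_tendsto_compose[OF contv tendsto_Pair[OF xhT2 tendsto_const]], of 2]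
    by (simp add: \<phi>_def[abs_def])
  have ev1: "eventually (\<lambda>h. 0 < h \<and> h \<le> 1) (at_right (0::real))"
    unfolding eventually_at_right_field by (rule exI[of _ 1]) auto
  have "((\<lambda>h. - \<phi> (-h)) \<longlongrightarrow> - \<phi> 0) (at_right 0)" by (rule tendsto_minus[OF T2])
  then have T3: "(\<phi> \<longlongrightarrow> - \<phi> 0) (at_right 0)"
    by (rule tendsto_cong[THEN iffD1, rotated]) (use ev1 phisym in \<open>auto elim!: eventually_mono\<close>)
  have phi0: "\<phi> 0 = 0" using tendsto_unique[OF _ T1 T3] by simp
  define z where "z = (1/lam) *\<^sub>R ((lam*c) *\<^sub>R e_3 - p0)"
  have z1: "z$1 < 0" using lp by (simp add: z_def)
  then have "z \<in> UT" using UTs by auto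
  then have contT: "isCont \<Theta> z" using UTc UTo continuous_on_eq_continuous_at by blast
  have yT: "((\<lambda>h. (1/lam) *\<^sub>R (xh h - p0)) \<longlongrightarrow> z) (at_right 0)"
    unfolding z_def xh_def by (intro tendsto_eq_intros) auto
  have TT: "((\<lambda>h. \<Theta> ((1/lam) *\<^sub>R (xh h - p0))) \<longlongrightarrow> \<Theta> z) (at_right 0)"
    by (rule isCont_tendsto_compose[OF contT yT])
  have pw: "(T0 - t') powr (1 - \<alpha>) = lam" using lam by (simp add: t'_def)
  have bnd: "\<bar>\<Theta> ((1/lam) *\<^sub>R (xh h - p0))\<bar> \<le> s' powr \<alpha> * \<bar>\<phi> h\<bar> + \<bar>g t'\<bar> * C"
    if "0 < h" "h \<le> 1" for h
  proof -
    have "\<Theta> ((1/lam) *\<^sub>R (xh h - p0)) = s' powr \<alpha> * \<phi> h - g t' * (W (xh h) t' \<bullet> e_th (xh h))"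
      using ans[rule_format, of "xh h" t'] inF[of h] that t' ip[of h] pw by (simp add: radxh t'_def)
    moreover have "\<bar>g t' * (W (xh h) t' \<bullet> e_th (xh h))\<bar> \<le> \<bar>g t'\<bar> * C"
      using W_eth[OF inF[of h] t'(1,2)] that by (simp add: abs_mult mult_left_mono)
    moreover have "\<bar>s' powr \<alpha> * \<phi> h\<bar> = s' powr \<alpha> * \<bar>\<phi> h\<bar>" by (simp add: abs_mult)
    ultimately show ?thesis
      using abs_triangle_ineq4[of "s' powr \<alpha> * \<phi> h" "g t' * (W (xh h) t' \<bullet> e_th (xh h))"] by linarith
  qed
  have RT: "((\<lambda>h. s' powr \<alpha> * \<bar>\<phi> h\<bar> + \<bar>g t'\<bar> * C) \<longlongrightarrow> s' powr \<alpha> * \<bar>\<phi> 0\<bar> + \<bar>g t'\<bar> * C) (at_right 0)"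
    by (intro tendsto_intros T1)
  have "\<bar>\<Theta> z\<bar> \<le> s' powr \<alpha> * \<bar>\<phi> 0\<bar> + \<bar>g t'\<bar> * C"
    by (rule tendsto_le[OF _ RT tendsto_rabs[OF TT]]) (use ev1 bnd in \<open>auto elim!: eventually_mono\<close>)
  also have "\<dots> = \<bar>g t'\<bar> * C" by (simp add: phi0)
  also have "\<dots> \<le> s' * C" using gb t' C_nonneg by (intro mult_right_mono) (auto simp: t'_def)
  finally show ?thesis unfolding z_def by (simp add: mult.commute)
qed

lemma circle_step:
  assumes s1: "0 < s" "s \<le> T0" "b < T0 - s"
  and lam: "lam = s powr (1 - \<alpha>)" and x0: "x0 \<in> fin_cyl L" "0 < rad x0"
  and x1: "x1 = vector [- rad x0, 0, x0$3]"
  shows "\<bar>\<Theta> ((1/lam) *\<^sub>R (x0 - p0)) - \<Theta> ((1/lam) *\<^sub>R (x1 - p0))\<bar> \<le> 2 * C * s"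
proof -
  define t where "t = T0 - s"
  have t: "0 \<le> t" "t < T0" "b < t" using s1 by (auto simp: t_def)
  have pw: "(T0 - t) powr (1 - \<alpha>) = lam" using lam by (simp add: t_def)
  have r1: "rad x1 = rad x0" using x0 by (simp add: x1 rad_def)
  have x1F: "x1 \<in> fin_cyl L" using x0 by (auto simp: fin_cyl_def r1) (simp_all add: x1)
  have x0C: "x0 \<in> cyl" using x0 by (auto simp: fin_cyl_def cyl_def)
  have eq: "v x0 t \<bullet> e_th x0 = v x1 t \<bullet> e_th x1"
    using sym[rule_format, of x0 x1 t] x0C x0 r1 t by (simp add: x1)
  have A0: "\<Theta> ((1/lam) *\<^sub>R (x0 - p0)) = (T0 - t) powr \<alpha> * (v x0 t \<bullet> e_th x0) - g t * (W x0 t \<bullet> e_th x0)"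
    using ans[rule_format, of x0 t] x0 t pw by simp
  have A1: "\<Theta> ((1/lam) *\<^sub>R (x1 - p0)) = (T0 - t) powr \<alpha> * (v x1 t \<bullet> e_th x1) - g t * (W x1 t \<bullet> e_th x1)"
    using ans[rule_format, of x1 t] x1F x0 r1 t pw by simp
  have "\<Theta> ((1/lam) *\<^sub>R (x0 - p0)) - \<Theta> ((1/lam) *\<^sub>R (x1 - p0))
        = g t * ((W x1 t \<bullet> e_th x1) - (W x0 t \<bullet> e_th x0))"
    using A0 A1 eq by (simp add: algebra_simps)
  also have "\<bar>\<dots>\<bar> \<le> \<bar>g t\<bar> * (2 * C)"
    unfolding abs_mult
    using W_eth[OF x0(1) t(1,2)] W_eth[OF x1F t(1,2)] by (intro mult_left_mono) auto
  also have "\<dots> \<le> s * (2 * C)" using gb t C_nonneg by (intro mult_right_mono) (auto simp: t_def)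
  finally show ?thesis by (simp add: mult_ac)
qed

lemma small_bound:
  assumes y0: "y0$1 < 0" and s1: "0 < s" "s \<le> 1" "s \<le> T0" "b < T0 - s"
  and sm: "s * ((y0$1)^2 + (y0$2)^2) \<le> - y0$1" "s * (- y0$1) \<le> 1/2" "s * \<bar>y0$3\<bar> \<le> L/2"
  shows "\<bar>\<Theta> y0\<bar> \<le> 3 * C * s"
proof -
  define a where "a = - y0$1"
  define B where "B = y0$2"
  define c where "c = y0$3"
  have ap: "a > 0" using y0 by (simp add: a_def)
  define lam where "lam = s powr (1 - \<alpha>)"
  have lp: "lam > 0" using s1 by (simp add: lam_def)
  have ls: "lam \<le> s"
  proof -
    have "s powr (1 - \<alpha>) \<le> s powr 1" using s1 al by (intro powr_mono') auto
    then show ?thesis using s1 by (simp add: lam_def)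
  qed
  define x0 where "x0 = p0 + lam *\<^sub>R y0"
  have x0c: "x0$1 = 1 - lam * a" "x0$2 = lam * B" "x0$3 = lam * c"
    by (simp_all add: x0_def a_def B_def c_def)
  have la0: "lam * a \<le> s * a" using ls ap by (intro mult_right_mono) auto
  have la: "lam * a \<le> 1/2" using la0 sm(2) unfolding a_def by linarith
  have lab0: "lam * (a^2 + B^2) \<le> s * (a^2 + B^2)" using ls by (intro mult_right_mono) auto
  have lab: "lam * (a^2 + B^2) \<le> a" using lab0 sm(1) unfolding a_def B_def by simp
  have lc0: "lam * \<bar>c\<bar> \<le> s * \<bar>c\<bar>" using ls by (intro mult_right_mono) auto
  have lc: "\<bar>lam * c\<bar> \<le> L/2" using lc0 lp sm(3) unfolding c_def by (simp add: abs_mult)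
  have rad2: "(rad x0)^2 = (1 - lam*a)^2 + (lam*B)^2" by (simp add: rad_sq x0c)
  have "(lam*B)^2 + (1 - lam*a)^2 = 1 - 2*lam*a + lam * (lam * (a^2 + B^2))"
    by (simp add: power2_eq_square algebra_simps)
  also have "\<dots> \<le> 1 - 2*lam*a + lam * a" using lab lp by (simp add: mult_left_mono)
  also have "\<dots> \<le> 1" using lp ap by simp
  finally have "(rad x0)^2 \<le> 1" using rad2 by simp
  then have r1: "rad x0 \<le> 1" using rad_nonneg[of x0] by (simp add: power_le_one_iff)
  have "\<bar>x0$1\<bar> \<le> rad x0" unfolding rad_def by (rule real_le_rsqrt) (simp add: power2_abs)
  then have r0: "rad x0 \<ge> 1/2" using la x0c by simp
  have x0F: "x0 \<in> fin_cyl L" using r1 lc x0c by (auto simp: fin_cyl_def abs_le_iff)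
  have y0eq: "(1/lam) *\<^sub>R (x0 - p0) = y0" using lp by (simp add: x0_def)
  define x1 :: "real^3" where "x1 = vector [- rad x0, 0, x0$3]"
  have st1: "\<bar>\<Theta> y0 - \<Theta> ((1/lam) *\<^sub>R (x1 - p0))\<bar> \<le> 2 * C * s"
    using circle_step[OF s1(1,3,4) lam_def x0F _ x1_def] r0 y0eq by simp
  define lam' where "lam' = lam / (1 + rad x0)"
  have lp': "lam' > 0" "lam' \<le> lam" using lp r0 by (simp_all add: lam'_def field_simps)
  define s' where "s' = lam' powr (1 / (1 - \<alpha>))"
  have s'p: "s' > 0" using lp' by (simp add: s'_def)
  have lam's: "lam' = s' powr (1 - \<alpha>)" using al lp' by (simp add: s'_def powr_powr)
  have "s' \<le> lam powr (1 / (1 - \<alpha>))" unfolding s'_def using lp' al by (intro powr_mono2) auto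
  also have "\<dots> = s" using al s1 by (simp add: lam_def powr_powr)
  finally have s's: "s' \<le> s" .
  have lc': "\<bar>lam' * c\<bar> \<le> L/2"
  proof -
    have "\<bar>lam' * c\<bar> \<le> \<bar>lam * c\<bar>" using lp' by (simp add: abs_mult mult_right_mono)
    then show ?thesis using lc by simp
  qed
  have st2: "\<bar>\<Theta> ((1/lam') *\<^sub>R ((lam'*c) *\<^sub>R e_3 - p0))\<bar> \<le> C * s'"
    using axis_step[OF s'p _ _ lam's lc'] s's s1 by simp
  have "0 < lam + lam * rad x0" using lp r0 by (simp add: add_pos_nonneg)
  have zeq: "(1/lam') *\<^sub>R ((lam'*c) *\<^sub>R e_3 - p0) = (1/lam) *\<^sub>R (x1 - p0)"
  proof -
    have i: "1/lam' = (1 + rad x0)/lam" by (simp add: lam'_def)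
    have c1: "(1/lam') * (0 - 1) = (1/lam) * (- rad x0 - 1)" unfolding i by (simp add: field_simps)
    have c3: "(1/lam') * (lam' * c) = (1/lam) * (lam * c)" using lp lp' by simp
    show ?thesis using c1 c3 by (simp add: vec_eq_iff forall_3 x1_def x0c)
  qed
  have "C * s' \<le> C * s" using C_nonneg s's by (simp add: mult_left_mono)
  then show ?thesis using st1 st2 zeq by simp
qed

lemma theta_zero_neg:
  assumes y0: "y0$1 < 0" shows "\<Theta> y0 = 0"
proof (rule ccontr)
  assume ne: "\<Theta> y0 \<noteq> 0"
  define a where "a = - y0$1"
  define Q where "Q = (y0$1)^2 + (y0$2)^2"
  define c where "c = \<bar>y0$3\<bar>"
  have ap: "a > 0" using y0 by (simp add: a_def)
  have Qp: "Q > 0" using y0 unfolding Q_def by (simp add: add_pos_nonneg)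
  define s where "s = min (min (min 1 (T0/2)) ((T0 - b)/2))
                         (min (min (a/Q) (1/(2*a))) (min (L/(2*c+1)) (\<bar>\<Theta> y0\<bar>/(6*C+6))))"
  have C0: "C \<ge> 0" by (rule C_nonneg)
  have cp: "c \<ge> 0" by (simp add: c_def)
  have sp: "s > 0" unfolding s_def using T0p bT ap Qp Lp cp C0 ne by auto
  have "s \<le> min (min 1 (T0/2)) ((T0 - b)/2)" unfolding s_def by (rule min.cobounded1)
  then have q: "s \<le> 1" "s \<le> T0/2" "s \<le> (T0 - b)/2" by simp_all
  have s1: "s \<le> 1" "s \<le> T0" "b < T0 - s" using q T0p bT by (simp_all add: field_simps)
  have "s \<le> a/Q" unfolding s_def by (simp add: min_le_iff_disj)
  then have "s * Q \<le> a" using Qp by (simp add: pos_le_divide_eq)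
  then have sm1: "s * ((y0$1)^2 + (y0$2)^2) \<le> - y0$1" unfolding Q_def a_def .
  have "s \<le> 1/(2*a)" unfolding s_def by (simp add: min_le_iff_disj)
  then have "s * (2*a) \<le> 1" using ap by (simp add: pos_le_divide_eq)
  then have sm2: "s * (- y0$1) \<le> 1/2" unfolding a_def by simp
  have "s \<le> L/(2*c+1)" unfolding s_def by (simp add: min_le_iff_disj)
  then have "s * (2*c+1) \<le> L" using cp by (simp add: pos_le_divide_eq)
  then have sm3: "s * \<bar>y0$3\<bar> \<le> L/2" using sp unfolding c_def by (simp add: algebra_simps)
  have "s \<le> \<bar>\<Theta> y0\<bar>/(6*C+6)" unfolding s_def by (simp add: min_le_iff_disj)
  then have "s * (6*C+6) \<le> \<bar>\<Theta> y0\<bar>" using C0 by (simp add: pos_le_divide_eq)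
  moreover have "\<bar>\<Theta> y0\<bar> \<le> 3 * C * s" using small_bound[OF y0 sp s1 sm1 sm2 sm3] .
  ultimately show False using sp C0 ne by (simp add: algebra_simps)
qed

lemma theta_zero: assumes "y$1 \<le> 0" shows "\<Theta> y = 0"
proof (cases "y$1 < 0")
  case True then show ?thesis by (rule theta_zero_neg)
next
  case False
  then have "y \<in> UT" using UTs assms by auto
  then have contT: "isCont \<Theta> y" using UTc UTo continuous_on_eq_continuous_at by blast
  have T: "((\<lambda>h. y - h *\<^sub>R p0) \<longlongrightarrow> y) (at_right 0)" by (intro tendsto_eq_intros) auto
  have T1: "((\<lambda>h. \<Theta> (y - h *\<^sub>R p0)) \<longlongrightarrow> \<Theta> y) (at_right 0)" by (rule isCont_tendsto_compose[OF contT T])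
  have ev: "eventually (\<lambda>h. \<Theta> (y - h *\<^sub>R p0) = 0) (at_right (0::real))"
    unfolding eventually_at_right_field
    by (rule exI[of _ 1]) (use assms in \<open>auto intro!: theta_zero_neg\<close>)
  have T2: "((\<lambda>h. \<Theta> (y - h *\<^sub>R p0)) \<longlongrightarrow> 0) (at_right 0)"
    by (rule tendsto_cong[THEN iffD2, OF ev tendsto_const])
  show ?thesis using tendsto_unique[OF _ T1 T2] by simp
qed

end

theorem proposition1p1:
  fixes \<alpha> \<beta> \<gamma> L T0 :: real
  assumes "\<alpha> < 0" and "\<beta> > 0" and "0 < \<gamma>" and "\<gamma> < 1" and "L > 0" and "T0 > 0"
  shows "\<not> (\<exists>(v :: (real^3) \<Rightarrow> real \<Rightarrow> real^3) (p :: (real^3) \<Rightarrow> real \<Rightarrow> real)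
              (\<Theta> :: (real^3) \<Rightarrow> real) (Vr :: (real^3) \<Rightarrow> real) (V3 :: (real^3) \<Rightarrow> real)
              (W :: (real^3) \<Rightarrow> real \<Rightarrow> real^3) (g :: real \<Rightarrow> real).
            ASE_solution L T0 v p
          \<and> C2g_loc \<gamma> {y. y$1 \<le> 0} \<Theta> \<and> C2g_loc \<gamma> {y. y$1 \<le> 0} Vr \<and> C2g_loc \<gamma> {y. y$1 \<le> 0} V3
          \<and> (\<exists>y. y$1 \<le> 0 \<and> \<Theta> y \<noteq> 0) \<and> (\<exists>y. y$1 \<le> 0 \<and> Vr y \<noteq> 0)
          \<and> (\<exists>y. y$1 \<le> 0 \<and> V3 y \<noteq> 0)
          \<and> C22g_loc \<gamma> (fin_cyl L) {0..<T0} W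
          \<and> g \<in> o[at_left T0](\<lambda>t. T0 - t)
          \<and> (\<forall>x t. x \<in> fin_cyl L \<and> 0 < rad x \<and> 0 \<le> t \<and> t < T0 \<longrightarrow>
               (let y = (1 / (T0 - t) powr (1 - \<alpha>)) *\<^sub>R (x - p0) in
                v x t = (1 / (T0 - t) powr \<alpha>) *\<^sub>R (\<Theta> y *\<^sub>R e_th x)
                      + ((T0 - t) powr \<beta> / (T0 - t) powr \<alpha>) *\<^sub>R (Vr y *\<^sub>R e_r x)
                      + ((T0 - t) powr \<beta> / (T0 - t) powr \<alpha>) *\<^sub>R (V3 y *\<^sub>R e_3)
                      + (g t / (T0 - t) powr \<alpha>) *\<^sub>R W x t)))"
proof
  assume "\<exists>(v :: (real^3) \<Rightarrow> real \<Rightarrow> real^3) (p :: (real^3) \<Rightarrow> real \<Rightarrow> real)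
              (\<Theta> :: (real^3) \<Rightarrow> real) (Vr :: (real^3) \<Rightarrow> real) (V3 :: (real^3) \<Rightarrow> real)
              (W :: (real^3) \<Rightarrow> real \<Rightarrow> real^3) (g :: real \<Rightarrow> real).
            ASE_solution L T0 v p
          \<and> C2g_loc \<gamma> {y. y$1 \<le> 0} \<Theta> \<and> C2g_loc \<gamma> {y. y$1 \<le> 0} Vr \<and> C2g_loc \<gamma> {y. y$1 \<le> 0} V3
          \<and> (\<exists>y. y$1 \<le> 0 \<and> \<Theta> y \<noteq> 0) \<and> (\<exists>y. y$1 \<le> 0 \<and> Vr y \<noteq> 0)
          \<and> (\<exists>y. y$1 \<le> 0 \<and> V3 y \<noteq> 0)
          \<and> C22g_loc \<gamma> (fin_cyl L) {0..<T0} W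
          \<and> g \<in> o[at_left T0](\<lambda>t. T0 - t)
          \<and> (\<forall>x t. x \<in> fin_cyl L \<and> 0 < rad x \<and> 0 \<le> t \<and> t < T0 \<longrightarrow>
               (let y = (1 / (T0 - t) powr (1 - \<alpha>)) *\<^sub>R (x - p0) in
                v x t = (1 / (T0 - t) powr \<alpha>) *\<^sub>R (\<Theta> y *\<^sub>R e_th x)
                      + ((T0 - t) powr \<beta> / (T0 - t) powr \<alpha>) *\<^sub>R (Vr y *\<^sub>R e_r x)
                      + ((T0 - t) powr \<beta> / (T0 - t) powr \<alpha>) *\<^sub>R (V3 y *\<^sub>R e_3)
                      + (g t / (T0 - t) powr \<alpha>) *\<^sub>R W x t))"
  then obtain v p \<Theta> Vr V3 W g where ase: "ASE_solution L T0 v p"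
    and cT: "C2g_loc \<gamma> {y. y$1 \<le> 0} \<Theta>" and nt: "\<exists>y. y$1 \<le> 0 \<and> \<Theta> y \<noteq> 0"
    and cW: "C22g_loc \<gamma> (fin_cyl L) {0..<T0} W"
    and gs: "g \<in> o[at_left T0](\<lambda>t. T0 - t)"
    and an: "\<forall>x t. x \<in> fin_cyl L \<and> 0 < rad x \<and> 0 \<le> t \<and> t < T0 \<longrightarrow>
               ((let y = (1 / (T0 - t) powr (1 - \<alpha>)) *\<^sub>R (x - p0) in
                v x t = (1 / (T0 - t) powr \<alpha>) *\<^sub>R (\<Theta> y *\<^sub>R e_th x)
                      + ((T0 - t) powr \<beta> / (T0 - t) powr \<alpha>) *\<^sub>R (Vr y *\<^sub>R e_r x)
                      + ((T0 - t) powr \<beta> / (T0 - t) powr \<alpha>) *\<^sub>R (V3 y *\<^sub>R e_3)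
                      + (g t / (T0 - t) powr \<alpha>) *\<^sub>R W x t))"
    by blast
  from cT obtain UT where UTo: "open UT" and UTs: "{y. y$1 \<le> 0} \<subseteq> UT"
    and UTc0: "\<forall>us. set us \<subseteq> axes3 \<and> length us \<le> 2 \<longrightarrow> continuous_on UT (iter_dd \<Theta> us)"
    unfolding C2g_loc_def by blast
  have UTc: "continuous_on UT \<Theta>" using UTc0[rule_format, of "[]"] by simp
  have "bounded (fin_cyl L)" by (rule bounded_fin_cyl)
  moreover have "adm22 []" by (simp add: adm22_def)
  ultimately obtain C where C0: "\<forall>x\<in>fin_cyl L \<inter> fin_cyl L. \<forall>t\<in>{0..<T0}.
            norm (iter_dd (\<lambda>(x,t). W x t) [] (x, t)) \<le> C
          \<and> (\<forall>y\<in>fin_cyl L \<inter> fin_cyl L. norm (iter_dd (\<lambda>(x,t). W x t) [] (x, t)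
                               - iter_dd (\<lambda>(x,t). W x t) [] (y, t)) \<le> C * dist x y powr \<gamma>)"
    using cW unfolding C22g_loc_def by blast
  have Cb: "\<forall>x\<in>fin_cyl L. \<forall>t\<in>{0..<T0}. norm (W x t) \<le> C" using C0 by simp
  have "eventually (\<lambda>t. norm (g t) \<le> 1 * norm (T0 - t)) (at_left T0)"
    by (rule landau_o.smallD[OF gs]) simp
  then obtain b where bT: "b < T0" and bb: "\<forall>\<tau>>b. \<tau> < T0 \<longrightarrow> norm (g \<tau>) \<le> 1 * norm (T0 - \<tau>)"
    unfolding eventually_at_left_field by blast
  have gb: "\<forall>\<tau>. b < \<tau> \<and> \<tau> < T0 \<longrightarrow> \<bar>g \<tau>\<bar> \<le> T0 - \<tau>" using bb by auto
  from ase obtain UV where UVs: "cyl \<times> {0..<T0} \<subseteq> UV" and sm: "smooth_on_open UV (\<lambda>(x,t). v x t)"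
    unfolding ASE_solution_def by blast
  have UVo: "open UV" using sm by (simp add: smooth_on_open_def)
  have "iter_dd (\<lambda>(x,t). v x t) [] differentiable_on UV" using sm by (simp only: smooth_on_open_def)
  then have UVc: "continuous_on UV (\<lambda>(x,t). v x t)" by (simp add: differentiable_imp_continuous_on)
  have sym: "\<forall>x y t. x \<in> cyl \<and> 0 < rad x \<and> rad y = rad x \<and> y$3 = x$3 \<and> 0 \<le> t \<and> t < T0 \<longrightarrow>
               v x t \<bullet> e_th x = v y t \<bullet> e_th y"
    using ase unfolding ASE_solution_def by blast
  have ans: "\<forall>x t. x \<in> fin_cyl L \<and> 0 < rad x \<and> 0 \<le> t \<and> t < T0 \<longrightarrow>
     \<Theta> ((1 / (T0 - t) powr (1 - \<alpha>)) *\<^sub>R (x - p0)) = (T0 - t) powr \<alpha> * (v x t \<bullet> e_th x) - g t * (W x t \<bullet> e_th x)"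
  proof (intro allI impI)
    fix x t assume h: "x \<in> fin_cyl L \<and> 0 < rad x \<and> 0 \<le> t \<and> t < T0"
    have e: "v x t = (1 / (T0 - t) powr \<alpha>) *\<^sub>R (\<Theta> ((1 / (T0 - t) powr (1 - \<alpha>)) *\<^sub>R (x - p0)) *\<^sub>R e_th x)
                      + ((T0 - t) powr \<beta> / (T0 - t) powr \<alpha>) *\<^sub>R (Vr ((1 / (T0 - t) powr (1 - \<alpha>)) *\<^sub>R (x - p0)) *\<^sub>R e_r x)
                      + ((T0 - t) powr \<beta> / (T0 - t) powr \<alpha>) *\<^sub>R (V3 ((1 / (T0 - t) powr (1 - \<alpha>)) *\<^sub>R (x - p0)) *\<^sub>R e_3)
                      + (g t / (T0 - t) powr \<alpha>) *\<^sub>R W x t"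
      using an[rule_format, OF h] unfolding Let_def .
    have "(T0 - t) powr \<alpha> > 0" using h by simp
    then show "\<Theta> ((1 / (T0 - t) powr (1 - \<alpha>)) *\<^sub>R (x - p0)) = (T0 - t) powr \<alpha> * (v x t \<bullet> e_th x) - g t * (W x t \<bullet> e_th x)"
      using ansatz_solve[OF _ _ e] h by blast
  qed
  from nt obtain y where y: "y$1 \<le> 0" "\<Theta> y \<noteq> 0" by blast
  have "\<Theta> y = 0"
    by (rule theta_zero[OF assms(1) assms(5) assms(6) UTo UTs UTc Cb bT gb UVo UVs UVc sym ans y(1)])
  with y(2) show False by simp
qed

end
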